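(* Let $(X_n)_{n\ge0}$ be a homogeneous Markov chain on $\mathbb{R}^d$ satisfying assumptions $(\mathcal{A}_1)$ and $(\mathcal{A}_2)$ below, started from $X_0\sim\mu$. Then for any $n\ge1$ and any sufficiently small $\epsilon>0$, $$\mathbb{P}_\mu\big(d_H(\mathbb{X}_n,\mathbb{M})>\epsilon\big)\le\frac{4^b(1-\kappa\epsilon^bV_d/2^b)^n}{\kappa\epsilon^bV_d}.$$ Consequently the chain is asymptotically $(\epsilon,\alpha)$-dense in $\mathbb{M}$, with threshold $$n_0=\frac{2^b}{\kappa\epsilon^bV_d}\Big(\ln\frac{4^b}{\kappa\epsilon^bV_d}+\ln\frac1\alpha\Big),$$ i.e. for sufficiently small $\epsilon>0$, any $\alpha\in(0,1)$ and all $n\ge n_0$, $\mathbb{P}_\mu(d_H(\mathbb{X}_n,\mathbb{M})\le\epsilon)\ge1-\alpha$.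
   Context: $(\mathcal{A}_1)$: the chain has an invariant probability measure $\mu$ with compact support $\mathbb{M}$. $(\mathcal{A}_2)$: the transition kernel $K(x,\cdot)=\mathbb{P}(X_1\in\cdot\mid X_0=x)$, $x\in\mathbb{M}$, satisfies $K(x,dy)=k(x,y)\nu(dy)$ for a positive measure $\nu$ on $\mathbb{M}$ and a positive function $k$; for some $b>0$ and $\epsilon_0>0$, $V_d:=\inf_{x\in\mathbb{M}}\inf_{0<\epsilon<\epsilon_0}\epsilon^{-b}\nu(B(x,\epsilon)\cap\mathbb{M})>0$; and there is $\kappa>0$ with $\inf_{x,y\in\mathbb{M}}k(x,y)\ge\kappa$. $B(x,\epsilon)$ is the closed Euclidean ball; $\mathbb{P}_\mu$ denotes probability when $X_0\sim\mu$. $\mathbb{X}_n=\{X_1,\ldots,X_n\}$ and $d_H$ is the Hausdorff distance $d_H(A,B)=\max(\sup_{x\in A}\inf_{y\in B}\|x-y\|,\sup_{x\in B}\inf_{y\in A}\|x-y\|)$. *)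

theory Defs
  imports "HOL-Analysis.Analysis" "HOL-Probability.Probability"
begin

definition hausdorff_dist :: "'a::metric_space set \<Rightarrow> 'a set \<Rightarrow> real" where
  "hausdorff_dist A B =
     max (SUP x\<in>A. INF y\<in>B. dist x y) (SUP x\<in>B. INF y\<in>A. dist x y)"

definition measure_support :: "'a::metric_space measure \<Rightarrow> 'a set" where
  "measure_support m = {x. \<forall>e>0. emeasure m (ball x e) > 0}"

definition gen_events :: "'w measure \<Rightarrow> (nat \<Rightarrow> 'w \<Rightarrow> 'a::topological_space) \<Rightarrow> nat \<Rightarrow> 'w set set" where
  "gen_events P X n =
     sigma_sets (space P) {X i -` B \<inter> space P | i B. i \<le> n \<and> B \<in> sets borel}"

end

theory Submission
  imports Defs
begin

lemma hd_le:
  fixes A M :: "'a::euclidean_space set"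
  assumes "finite A" "A \<noteq> {}" "bounded M" "M \<noteq> {}"
  shows "hausdorff_dist A M \<le> e \<longleftrightarrow>
     (\<forall>a\<in>A. infdist a M \<le> e) \<and> (\<forall>x\<in>M. \<exists>a\<in>A. dist x a \<le> e)"
proof -
  have h: "hausdorff_dist A M = max (SUP a\<in>A. infdist a M) (SUP x\<in>M. infdist x A)"
    unfolding hausdorff_dist_def infdist_def using assms by simp
  have b1: "bdd_above ((\<lambda>a. infdist a M) ` A)" using assms(1) by simp
  obtain a0 where a0: "a0 \<in> A" using assms by auto
  obtain c R where cR: "\<And>x. x \<in> M \<Longrightarrow> dist c x \<le> R" using assms(3) unfolding bounded_def by auto
  have b2: "bdd_above ((\<lambda>x. infdist x A) ` M)"
  proof (rule bdd_aboveI2)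
    fix x assume "x \<in> M"
    have "infdist x A \<le> dist x a0" using a0 by (rule infdist_le)
    also have "\<dots> \<le> dist x c + dist c a0" by (rule dist_triangle)
    also have "\<dots> \<le> R + dist c a0" using cR[OF \<open>x\<in>M\<close>] by (simp add: dist_commute)
    finally show "infdist x A \<le> R + dist c a0" .
  qed
  have i: "infdist x A \<le> e \<longleftrightarrow> (\<exists>a\<in>A. dist x a \<le> e)" for x
  proof
    assume "infdist x A \<le> e"
    moreover obtain a where "a \<in> A" "infdist x A = dist x a"
      using infdist_attains_inf[of A x] assms finite_imp_compact compact_imp_closed by blast
    ultimately show "\<exists>a\<in>A. dist x a \<le> e" by auto
  next
    assume "\<exists>a\<in>A. dist x a \<le> e" then show "infdist x A \<le> e" using infdist_le2 by blast
  qed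
  show ?thesis unfolding h max.bounded_iff
    using cSUP_le_iff[OF _ b1, of e] cSUP_le_iff[OF _ b2, of e] assms i by auto
qed

lemma dense_iff:
  fixes A M D :: "'a::euclidean_space set"
  assumes "finite A" "D \<subseteq> M" "M \<subseteq> closure D"
  shows "(\<forall>x\<in>M. \<exists>a\<in>A. dist x a \<le> e) \<longleftrightarrow> (\<forall>x\<in>D. \<exists>a\<in>A. dist x a \<le> e)"
proof
  assume "\<forall>x\<in>D. \<exists>a\<in>A. dist x a \<le> e"
  then have "D \<subseteq> (\<Union>a\<in>A. cball a e)" by (auto simp: dist_commute)
  moreover have "closed (\<Union>a\<in>A. cball a e)" using assms(1) by (intro closed_UN) auto
  ultimately have "closure D \<subseteq> (\<Union>a\<in>A. cball a e)" by (rule closure_minimal)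
  then show "\<forall>x\<in>M. \<exists>a\<in>A. dist x a \<le> e" using assms(3) by (fastforce simp: dist_commute subset_iff)
qed (use assms in auto)

lemma hd_meas:
  fixes X :: "nat \<Rightarrow> 'w \<Rightarrow> 'a::euclidean_space"
  assumes X: "\<And>i. X i \<in> borel_measurable P" and M: "compact M" "M \<noteq> {}" and n: "n \<ge> 1"
  shows "{\<omega>\<in>space P. hausdorff_dist ((\<lambda>i. X i \<omega>) ` {1..n}) M \<le> e} \<in> sets P"
proof -
  obtain D where D: "countable D" "D \<subseteq> M" "M \<subseteq> closure D" using separable by blast
  have "{\<omega>\<in>space P. hausdorff_dist ((\<lambda>i. X i \<omega>) ` {1..n}) M \<le> e} =
     {\<omega>\<in>space P. (\<forall>i\<in>{1..n}. infdist (X i \<omega>) M \<le> e) \<and> (\<forall>x\<in>D. \<exists>i\<in>{1..n}. dist x (X i \<omega>) \<le> e)}"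
    (is "?L = ?R")
  proof (intro Collect_cong conj_cong refl)
    fix \<omega>
    have "hausdorff_dist ((\<lambda>i. X i \<omega>) ` {1..n}) M \<le> e \<longleftrightarrow>
      (\<forall>a\<in>(\<lambda>i. X i \<omega>) ` {1..n}. infdist a M \<le> e) \<and> (\<forall>x\<in>M. \<exists>a\<in>(\<lambda>i. X i \<omega>) ` {1..n}. dist x a \<le> e)"
      using n M by (intro hd_le) (auto simp: compact_imp_bounded)
    also have "\<dots> \<longleftrightarrow> (\<forall>a\<in>(\<lambda>i. X i \<omega>) ` {1..n}. infdist a M \<le> e) \<and> (\<forall>x\<in>D. \<exists>a\<in>(\<lambda>i. X i \<omega>) ` {1..n}. dist x a \<le> e)"
      using dense_iff[OF _ D(2,3), of "(\<lambda>i. X i \<omega>) ` {1..n}" e] by simp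
    finally show "hausdorff_dist ((\<lambda>i. X i \<omega>) ` {1..n}) M \<le> e \<longleftrightarrow>
       (\<forall>i\<in>{1..n}. infdist (X i \<omega>) M \<le> e) \<and> (\<forall>x\<in>D. \<exists>i\<in>{1..n}. dist x (X i \<omega>) \<le> e)" by auto
  qed
  also have "\<dots> \<in> sets P"
  proof -
    have [measurable]: "X i \<in> borel_measurable P" for i by (rule X)
    have [measurable]: "(\<lambda>x. infdist x M) \<in> borel_measurable borel"
      by (intro borel_measurable_continuous_onI continuous_intros)
    have "Measurable.pred P (\<lambda>\<omega>. \<forall>x\<in>D. \<exists>i\<in>{1..n}. dist x (X i \<omega>) \<le> e)"
      by (intro measurable_pred_countable[OF D(1)]) measurable
    then show ?thesis by measurable
  qed
  finally show ?thesis .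
qed
theorem proposition5p1:
  fixes P :: "'w measure"
    and X :: "nat \<Rightarrow> 'w \<Rightarrow> 'a::euclidean_space"
    and \<mu> \<nu> :: "'a measure"
    and k :: "'a \<Rightarrow> 'a \<Rightarrow> real"
    and b \<epsilon>0 \<kappa> :: real
    and \<MM> :: "'a set"
  defines "\<MM> \<equiv> measure_support \<mu>"
  defines "V \<equiv> (INF x\<in>\<MM>. INF e\<in>{0<..<\<epsilon>0}. measure \<nu> (cball x e \<inter> \<MM>) / e powr b)"
  assumes P: "prob_space P"
    and X_meas: "\<And>i. X i \<in> borel_measurable P"
    \<comment> \<open>(A1): invariant probability measure with compact support\<close>
    and mu_prob: "prob_space \<mu>" and mu_sets: "sets \<mu> = sets borel"
    and M_compact: "compact \<MM>"
    and invariant: "\<And>A. A \<in> sets borel \<Longrightarrow>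
          emeasure \<mu> A = (\<integral>\<^sup>+ x. emeasure (density \<nu> (k x)) A \<partial>\<mu>)"
    \<comment> \<open>(A2): kernel K(x,dy) = k(x,y) nu(dy), nu a positive measure on M\<close>
    and nu_sets: "sets \<nu> = sets borel"
    and nu_on_M: "emeasure \<nu> (- \<MM>) = 0"
    and k_meas: "(\<lambda>(x, y). k x y) \<in> borel_measurable (borel \<Otimes>\<^sub>M borel)"
    and k_pos: "\<And>x y. x \<in> \<MM> \<Longrightarrow> y \<in> \<MM> \<Longrightarrow> k x y > 0"
    and K_prob: "\<And>x. x \<in> \<MM> \<Longrightarrow> prob_space (density \<nu> (k x))"
    and b_pos: "b > 0" and eps0_pos: "\<epsilon>0 > 0"
    and V_pos: "V > 0"
    and kappa_pos: "\<kappa> > 0"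
    and k_lower: "\<And>x y. x \<in> \<MM> \<Longrightarrow> y \<in> \<MM> \<Longrightarrow> k x y \<ge> \<kappa>"
    \<comment> \<open>homogeneous Markov chain with kernel K, started from mu\<close>
    and init: "distr P borel (X 0) = \<mu>"
    and markov: "\<And>n A G. A \<in> sets borel \<Longrightarrow> G \<in> gen_events P X n \<Longrightarrow>
          emeasure P (G \<inter> {\<omega> \<in> space P. X (Suc n) \<omega> \<in> A})
            = (\<integral>\<^sup>+ \<omega>. indicator G \<omega> * emeasure (density \<nu> (k (X n \<omega>))) A \<partial>P)"
  shows "\<exists>\<epsilon>1>0. \<forall>\<epsilon>. 0 < \<epsilon> \<and> \<epsilon> < \<epsilon>1 \<longrightarrow>
           (\<forall>n\<ge>1. measure P {\<omega> \<in> space P. hausdorff_dist ((\<lambda>i. X i \<omega>) ` {1..n}) \<MM> > \<epsilon>}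
               \<le> 4 powr b * (1 - \<kappa> * \<epsilon> powr b * V / 2 powr b) ^ n / (\<kappa> * \<epsilon> powr b * V))
         \<and> (\<forall>\<alpha>. 0 < \<alpha> \<and> \<alpha> < 1 \<longrightarrow>
              (\<forall>n::nat. real n \<ge> 2 powr b / (\<kappa> * \<epsilon> powr b * V)
                  * (ln (4 powr b / (\<kappa> * \<epsilon> powr b * V)) + ln (1 / \<alpha>)) \<longrightarrow>
                measure P {\<omega> \<in> space P. hausdorff_dist ((\<lambda>i. X i \<omega>) ` {1..n}) \<MM> \<le> \<epsilon>}
                  \<ge> 1 - \<alpha>))"
proof -
  interpret P: prob_space P by (rule P)
  interpret mu: prob_space \<mu> by (rule mu_prob)
  define K where "K x = density \<nu> (\<lambda>y. ennreal (k x y))" for x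
  have space_nu: "space \<nu> = UNIV" using sets_eq_imp_space_eq[OF nu_sets] by simp
  have space_mu: "space \<mu> = UNIV" using sets_eq_imp_space_eq[OF mu_sets] by simp
  have M_borel[measurable]: "\<MM> \<in> sets borel"
    using M_compact compact_imp_closed borel_closed by blast
  have k_meas2[measurable]: "k x \<in> borel_measurable borel" for x
    using measurable_Pair2[OF k_meas, of x] by simp
  have k_meas_nu: "(\<lambda>y. ennreal (k x y)) \<in> borel_measurable \<nu>" for x
    unfolding measurable_cong_sets[OF nu_sets refl] by measurable
  have sets_K: "sets (K x) = sets borel" for x by (simp add: K_def nu_sets)
  have space_K: "space (K x) = UNIV" for x using sets_eq_imp_space_eq[OF sets_K[of x]] by simp
  have K_emeas: "emeasure (K x) A = (\<integral>\<^sup>+ y. ennreal (k x y) * indicator A y \<partial>\<nu>)"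
    if "A \<in> sets borel" for x A
    unfolding K_def using that nu_sets by (intro emeasure_density k_meas_nu) auto
  have nu_null: "- \<MM> \<in> null_sets \<nu>" using nu_on_M nu_sets by (auto simp: null_sets_def)
  have AE_nu: "AE y in \<nu>. y \<in> \<MM>" by (rule AE_I'[OF nu_null]) auto
  have K_null: "emeasure (K x) (- \<MM>) = 0" for x
  proof -
    have "emeasure (K x) (- \<MM>) = (\<integral>\<^sup>+ y. ennreal (k x y) * indicator (- \<MM>) y \<partial>\<nu>)"
      by (rule K_emeas) auto
    also have "\<dots> = (\<integral>\<^sup>+ y. 0 \<partial>\<nu>)"
      by (rule nn_integral_cong_AE) (use AE_nu in \<open>auto elim!: eventually_mono\<close>)
    finally show ?thesis by simp
  qed
  have K_null': "- \<MM> \<in> null_sets (K x)" for x using K_null[of x] sets_K[of x] by (auto simp: null_sets_def)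
  have K_M: "emeasure (K x) \<MM> = emeasure (K x) UNIV" for x
  proof -
    have "emeasure (K x) (\<MM> \<union> - \<MM>) = emeasure (K x) \<MM>"
      by (rule emeasure_Un_null_set) (use sets_K K_null' in auto)
    then show ?thesis by simp
  qed
  have mu_M: "emeasure \<mu> \<MM> = 1"
  proof -
    have "emeasure \<mu> \<MM> = (\<integral>\<^sup>+ x. emeasure (K x) \<MM> \<partial>\<mu>)" using invariant[OF M_borel] by (simp add: K_def)
    also have "\<dots> = (\<integral>\<^sup>+ x. emeasure (K x) UNIV \<partial>\<mu>)" by (simp add: K_M)
    also have "\<dots> = emeasure \<mu> UNIV" using invariant[of UNIV] by (simp add: K_def)
    finally show ?thesis using mu.emeasure_space_1 space_mu by simp
  qed
  have mu_null: "emeasure \<mu> (- \<MM>) = 0"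
    using invariant[of "- \<MM>"] K_null by (simp add: K_def)
  have M_ne: "\<MM> \<noteq> {}" using mu_M by auto
  then obtain x0 where x0: "x0 \<in> \<MM>" by auto
  have K_prob': "prob_space (K x)" if "x \<in> \<MM>" for x using K_prob[OF that] by (simp add: K_def)
  have int_lower: "ennreal \<kappa> * emeasure \<nu> (C \<inter> \<MM>) \<le> emeasure (K x) C"
    if "x \<in> \<MM>" "C \<in> sets borel" for x C
  proof -
    have "ennreal \<kappa> * emeasure \<nu> (C \<inter> \<MM>) = (\<integral>\<^sup>+ y. ennreal \<kappa> * indicator (C \<inter> \<MM>) y \<partial>\<nu>)"
      using that nu_sets by (intro nn_integral_cmult_indicator[symmetric]) auto
    also have "\<dots> \<le> (\<integral>\<^sup>+ y. ennreal (k x y) * indicator C y \<partial>\<nu>)"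
      by (intro nn_integral_mono) (auto simp: indicator_def k_lower that intro!: ennreal_leI)
    also have "\<dots> = emeasure (K x) C" using K_emeas[OF that(2)] by simp
    finally show ?thesis .
  qed
  have nuM_fin: "emeasure \<nu> \<MM> \<noteq> \<infinity>" and nuM: "\<kappa> * measure \<nu> \<MM> \<le> 1"
  proof -
    interpret Kx: prob_space "K x0" by (rule K_prob'[OF x0])
    have "ennreal \<kappa> * emeasure \<nu> (UNIV \<inter> \<MM>) \<le> emeasure (K x0) UNIV"
      by (rule int_lower[OF x0]) auto
    also have "\<dots> = 1" using Kx.emeasure_space_1 space_K by simp
    finally have le: "ennreal \<kappa> * emeasure \<nu> \<MM> \<le> 1" by simp
    show fin: "emeasure \<nu> \<MM> \<noteq> \<infinity>"
    proof
      assume "emeasure \<nu> \<MM> = \<infinity>"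
      with le kappa_pos show False by (simp add: ennreal_mult_top top_unique)
    qed
    have "ennreal (\<kappa> * measure \<nu> \<MM>) = ennreal \<kappa> * emeasure \<nu> \<MM>"
      using fin kappa_pos by (simp add: ennreal_mult emeasure_eq_ennreal_measure)
    with le have "ennreal (\<kappa> * measure \<nu> \<MM>) \<le> ennreal 1" by simp
    then show "\<kappa> * measure \<nu> \<MM> \<le> 1" by (subst (asm) ennreal_le_iff) auto
  qed
  interpret nu: finite_measure \<nu>
  proof
    have "emeasure \<nu> (\<MM> \<union> - \<MM>) = emeasure \<nu> \<MM>"
      by (rule emeasure_Un_null_set) (use nu_sets nu_null in auto)
    then show "emeasure \<nu> (space \<nu>) \<noteq> \<infinity>" using nuM_fin space_nu by simp
  qed
  have K_lower: "\<kappa> * measure \<nu> (C \<inter> \<MM>) \<le> measure (K x) C"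
    if "x \<in> \<MM>" "C \<in> sets borel" for x C
  proof -
    interpret Kx: prob_space "K x" by (rule K_prob'[OF that(1)])
    have "ennreal (\<kappa> * measure \<nu> (C \<inter> \<MM>)) \<le> ennreal (measure (K x) C)"
      using int_lower[OF that] kappa_pos
      by (simp add: ennreal_mult nu.emeasure_eq_measure Kx.emeasure_eq_measure)
    then show ?thesis by (subst (asm) ennreal_le_iff) auto
  qed
  have ge_alg: "sigma_algebra (space P) (gen_events P X n)" for n
    unfolding gen_events_def by (rule sigma_algebra_sigma_sets) auto
  have ge_basic: "X i -` B \<inter> space P \<in> gen_events P X n" if "i \<le> n" "B \<in> sets borel" for i n B
    unfolding gen_events_def by (rule sigma_sets.Basic) (use that in blast)
  have ge_space: "space P \<in> gen_events P X n" for n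
  proof -
    interpret S: sigma_algebra "space P" "gen_events P X n" by (rule ge_alg)
    show ?thesis by (rule S.top)
  qed
  have [measurable]: "X i \<in> borel_measurable P" for i by (rule X_meas)
  have AE_M: "AE \<omega> in P. X i \<omega> \<in> \<MM>" for i
  proof -
    have N: "{\<omega>\<in>space P. X i \<omega> \<in> - \<MM>} \<in> null_sets P"
    proof (cases i)
      case 0
      have "emeasure P {\<omega>\<in>space P. X i \<omega> \<in> - \<MM>} = emeasure (distr P borel (X 0)) (- \<MM>)"
        using 0 by (subst emeasure_distr) (auto intro!: arg_cong[where f="emeasure P"])
      also have "\<dots> = 0" using init mu_null by simp
      finally show ?thesis by (auto simp: null_sets_def)
    next
      case (Suc m)
      have "emeasure P (space P \<inter> {\<omega>\<in>space P. X (Suc m) \<omega> \<in> - \<MM>})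
          = (\<integral>\<^sup>+ \<omega>. indicator (space P) \<omega> * emeasure (density \<nu> (k (X m \<omega>))) (- \<MM>) \<partial>P)"
        by (rule markov) (auto intro: ge_space)
      also have "\<dots> = 0" using K_null by (simp add: K_def)
      finally show ?thesis using Suc by (auto simp: null_sets_def Int_absorb1)
    qed
    show ?thesis by (rule AE_I'[OF N]) auto
  qed
  have E_bound: "measure P {\<omega>\<in>space P. \<forall>i\<in>{1..n}. X i \<omega> \<notin> cball c r}
      \<le> (1 - \<kappa> * measure \<nu> (cball c r \<inter> \<MM>)) ^ n"
    and q_le1: "\<kappa> * measure \<nu> (cball c r \<inter> \<MM>) \<le> 1"
    if c: "c \<in> \<MM>" for c r n
  proof -
    define C where "C = cball c r"
    define q where "q = \<kappa> * measure \<nu> (C \<inter> \<MM>)"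
    have C_borel[measurable]: "C \<in> sets borel" unfolding C_def by simp
    have q1: "q \<le> 1"
    proof -
      interpret Kc: prob_space "K c" by (rule K_prob'[OF c])
      show ?thesis using K_lower[OF c C_borel] Kc.prob_le_1[of C] unfolding q_def by linarith
    qed
    then show "\<kappa> * measure \<nu> (cball c r \<inter> \<MM>) \<le> 1" unfolding q_def C_def .
    define E where "E n = {\<omega>\<in>space P. \<forall>i\<in>{1..n}. X i \<omega> \<notin> C}" for n
    have E_ge: "E n \<in> gen_events P X n" for n
    proof -
      interpret S: sigma_algebra "space P" "gen_events P X n" by (rule ge_alg)
      have "E n = space P - (\<Union>i\<in>{1..n}. X i -` C \<inter> space P)" unfolding E_def by auto
      also have "\<dots> \<in> gen_events P X n"
        by (intro S.Diff S.top S.finite_UN) (auto intro: ge_basic)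
      finally show ?thesis .
    qed
    have E_sets[measurable]: "E n \<in> sets P" for n unfolding E_def by measurable
    have K_compl: "emeasure (K x) (- C) \<le> ennreal (1 - q)" if x: "x \<in> \<MM>" for x
    proof -
      interpret Kx: prob_space "K x" by (rule K_prob'[OF x])
      have "measure (K x) (- C) = 1 - measure (K x) C"
        using Kx.prob_compl[of C] sets_K space_K by (simp add: Compl_eq_Diff_UNIV)
      then have "measure (K x) (- C) \<le> 1 - q" using K_lower[OF x C_borel] unfolding q_def by linarith
      then show ?thesis by (simp add: Kx.emeasure_eq_measure ennreal_leI)
    qed
    have "emeasure P (E n) \<le> ennreal ((1 - q) ^ n)" for n
    proof (induction n)
      case 0
      have "E 0 = space P" unfolding E_def by auto
      then show ?case using P.emeasure_space_1 by simp
    next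
      case (Suc n)
      have "E (Suc n) = E n \<inter> {\<omega>\<in>space P. X (Suc n) \<omega> \<in> - C}"
        unfolding E_def by (auto simp: le_Suc_eq) (metis atLeastAtMost_iff le_refl Suc_le_mono le0)
      then have "emeasure P (E (Suc n)) = (\<integral>\<^sup>+ \<omega>. indicator (E n) \<omega> * emeasure (K (X n \<omega>)) (- C) \<partial>P)"
        using markov[OF _ E_ge, of "- C" n] by (simp add: K_def)
      also have "\<dots> \<le> (\<integral>\<^sup>+ \<omega>. ennreal (1 - q) * indicator (E n) \<omega> \<partial>P)"
        by (intro nn_integral_mono_AE)
           (use AE_M[of n] in \<open>auto elim!: eventually_mono simp: indicator_def K_compl\<close>)
      also have "\<dots> = ennreal (1 - q) * emeasure P (E n)"
        by (rule nn_integral_cmult_indicator) simp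
      also have "\<dots> \<le> ennreal (1 - q) * ennreal ((1 - q) ^ n)"
        by (intro mult_left_mono Suc.IH) auto
      also have "\<dots> = ennreal ((1 - q) ^ Suc n)"
        using q1 by (simp add: ennreal_mult[symmetric])
      finally show ?case .
    qed
    then have "ennreal (measure P (E n)) \<le> ennreal ((1 - q) ^ n)"
      by (simp add: P.emeasure_eq_measure)
    then have "measure P (E n) \<le> (1 - q) ^ n" using q1 by (subst (asm) ennreal_le_iff) auto
    then show "measure P {\<omega>\<in>space P. \<forall>i\<in>{1..n}. X i \<omega> \<notin> cball c r}
      \<le> (1 - \<kappa> * measure \<nu> (cball c r \<inter> \<MM>)) ^ n" unfolding E_def C_def q_def .
  qed
  have V_le: "V * e powr b \<le> measure \<nu> (cball x e \<inter> \<MM>)" if x: "x \<in> \<MM>" and e: "0 < e" "e < \<epsilon>0" for x e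
  proof -
    have nn: "0 \<le> measure \<nu> (cball y e' \<inter> \<MM>) / e' powr b" for y e' by simp
    have bdd1: "bdd_below ((\<lambda>e. measure \<nu> (cball y e \<inter> \<MM>) / e powr b) ` {0<..<\<epsilon>0})" for y
      by (intro bdd_belowI2[where m=0] nn)
    have F_nn: "0 \<le> (INF e\<in>{0<..<\<epsilon>0}. measure \<nu> (cball y e \<inter> \<MM>) / e powr b)" for y
      using eps0_pos by (intro cINF_greatest nn) auto
    have "V \<le> (INF e\<in>{0<..<\<epsilon>0}. measure \<nu> (cball x e \<inter> \<MM>) / e powr b)"
      unfolding V_def by (rule cINF_lower[OF bdd_belowI2[where m=0] x]) (rule F_nn)
    also have "\<dots> \<le> measure \<nu> (cball x e \<inter> \<MM>) / e powr b"
      by (rule cINF_lower[OF bdd1]) (use e in auto)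
    finally show ?thesis using e by (simp add: pos_le_divide_eq)
  qed
  show ?thesis
  proof (intro exI[of _ \<epsilon>0] conjI allI impI eps0_pos)
    fix \<epsilon> assume \<epsilon>: "0 < \<epsilon> \<and> \<epsilon> < \<epsilon>0"
    define q0 where "q0 = \<kappa> * \<epsilon> powr b * V / 2 powr b"
    define N where "N = 4 powr b / (\<kappa> * \<epsilon> powr b * V)"
    have pos: "0 < \<kappa> * \<epsilon> powr b * V" using \<epsilon> kappa_pos V_pos by simp
    have q0_eq: "q0 = \<kappa> * (V * (\<epsilon>/2) powr b)" using \<epsilon> by (simp add: q0_def powr_divide)
    have q0_le: "q0 \<le> \<kappa> * measure \<nu> (cball c (\<epsilon>/2) \<inter> \<MM>)" if "c \<in> \<MM>" for c
      unfolding q0_eq using V_le[OF that, of "\<epsilon>/2"] kappa_pos \<epsilon> by (intro mult_left_mono) auto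
    have q0_pos: "0 < q0" unfolding q0_def using pos by simp
    have q0_1: "q0 \<le> 1" using q0_le[OF x0] q_le1[OF x0, of "\<epsilon>/2"] by linarith
    define Sep where "Sep S \<longleftrightarrow> finite S \<and> S \<subseteq> \<MM> \<and> (\<forall>s\<in>S. \<forall>t\<in>S. s \<noteq> t \<longrightarrow> \<epsilon>/2 < dist s t)" for S
    have card_bound: "real (card S) \<le> N" if "Sep S" for S
    proof -
      define B where "B s = cball s (\<epsilon>/4) \<inter> \<MM>" for s
      have SS: "finite S" "S \<subseteq> \<MM>" "\<And>s t. s \<in> S \<Longrightarrow> t \<in> S \<Longrightarrow> s \<noteq> t \<Longrightarrow> \<epsilon>/2 < dist s t"
        using that unfolding Sep_def by auto
      have disj: "disjoint_family_on B S"
        unfolding disjoint_family_on_def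
      proof (intro ballI impI)
        fix s t assume st: "s \<in> S" "t \<in> S" "s \<noteq> t"
        show "B s \<inter> B t = {}"
        proof (rule ccontr)
          assume "B s \<inter> B t \<noteq> {}"
          then obtain y where "dist s y \<le> \<epsilon>/4" "dist t y \<le> \<epsilon>/4" unfolding B_def by auto
          moreover have "dist s t \<le> dist s y + dist t y" using dist_triangle3[of s t y] by (simp add: dist_commute)
          ultimately show False using SS(3)[OF st] by linarith
        qed
      qed
      have "real (card S) * (V * (\<epsilon>/4) powr b) = (\<Sum>s\<in>S. V * (\<epsilon>/4) powr b)" by simp
      also have "\<dots> \<le> (\<Sum>s\<in>S. measure \<nu> (B s))"
        unfolding B_def using SS(2) \<epsilon> by (intro sum_mono V_le) auto
      also have "\<dots> = measure \<nu> (\<Union>s\<in>S. B s)"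
      proof (rule measure_finite_Union[symmetric])
        show "finite S" by (rule SS(1))
        show "B ` S \<subseteq> sets \<nu>" unfolding B_def nu_sets by auto
        show "disjoint_family_on B S" by (rule disj)
        show "emeasure \<nu> (B s) \<noteq> \<infinity>" for s using nu.emeasure_finite[of "B s"] by simp
      qed
      also have "\<dots> \<le> measure \<nu> \<MM>"
      proof (rule nu.finite_measure_mono)
        show "(\<Union>s\<in>S. B s) \<subseteq> \<MM>" unfolding B_def by auto
        show "\<MM> \<in> sets \<nu>" unfolding nu_sets by simp
      qed
      also have "\<dots> \<le> 1/\<kappa>" using nuM kappa_pos by (subst pos_le_divide_eq) (auto simp: mult.commute)
      finally have *: "real (card S) * (V * (\<epsilon>/4) powr b) \<le> 1/\<kappa>" .
      have eq4: "(\<epsilon>/4) powr b = \<epsilon> powr b / 4 powr b" using \<epsilon> by (simp add: powr_divide)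
      have **: "real (card S) * (V * (\<epsilon> powr b / 4 powr b)) \<le> 1/\<kappa>" using * unfolding eq4 .
      have "real (card S) * (V * (\<epsilon> powr b / 4 powr b)) * (\<kappa> * 4 powr b) \<le> 1/\<kappa> * (\<kappa> * 4 powr b)"
        using ** kappa_pos by (intro mult_right_mono) auto
      moreover have "real (card S) * (V * (\<epsilon> powr b / 4 powr b)) * (\<kappa> * 4 powr b)
          = real (card S) * (\<kappa> * \<epsilon> powr b * V)" by simp
      moreover have "1/\<kappa> * (\<kappa> * 4 powr b) = 4 powr b" using kappa_pos by simp
      ultimately have "real (card S) * (\<kappa> * \<epsilon> powr b * V) \<le> 4 powr b" by linarith
      then show ?thesis unfolding N_def using pos by (simp add: pos_le_divide_eq)
    qed
    have fin: "finite (card ` {S. Sep S})"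
    proof (rule finite_subset[of _ "{..nat \<lceil>N\<rceil>}"])
      show "card ` {S. Sep S} \<subseteq> {..nat \<lceil>N\<rceil>}"
      proof (rule image_subsetI)
        fix S assume "S \<in> {S. Sep S}"
        then have "Sep S" by simp
        then have "real (card S) \<le> real (nat \<lceil>N\<rceil>)" using card_bound[OF \<open>Sep S\<close>] real_nat_ceiling_ge[of N] by linarith
        then show "card S \<in> {..nat \<lceil>N\<rceil>}" by simp
      qed
    qed simp
    define m where "m = Max (card ` {S. Sep S})"
    have "Sep {}" unfolding Sep_def by simp
    then have "m \<in> card ` {S. Sep S}" unfolding m_def using fin by (intro Max_in) auto
    then obtain S where S: "Sep S" "card S = m" by auto
    have Sfin: "finite S" "S \<subseteq> \<MM>" using S(1) unfolding Sep_def by auto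
    have cover: "\<exists>s\<in>S. dist x s \<le> \<epsilon>/2" if x: "x \<in> \<MM>" for x
    proof (rule ccontr)
      assume "\<not> ?thesis"
      then have far: "\<forall>s\<in>S. \<epsilon>/2 < dist x s" by auto
      have xS: "x \<notin> S" using far \<epsilon> by fastforce
      have "Sep (insert x S)" using S(1) far x unfolding Sep_def by (auto simp: dist_commute)
      then have "card (insert x S) \<le> m" unfolding m_def using fin by (intro Max_ge) auto
      moreover have "card (insert x S) = Suc m" using S xS Sfin by simp
      ultimately show False by simp
    qed
    have cardS: "real (card S) \<le> N" by (rule card_bound[OF S(1)])
    have main: "measure P {\<omega> \<in> space P. hausdorff_dist ((\<lambda>i. X i \<omega>) ` {1..n}) \<MM> > \<epsilon>} \<le> N * (1 - q0) ^ n"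
      if n: "n \<ge> 1" for n
    proof -
      define E where "E s = {\<omega>\<in>space P. \<forall>i\<in>{1..n}. X i \<omega> \<notin> cball s (\<epsilon>/2)}" for s
      define Nn where "Nn = {\<omega>\<in>space P. \<not> (\<forall>i\<in>{1..n}. X i \<omega> \<in> \<MM>)}"
      have Nn_null: "Nn \<in> null_sets P"
      proof -
        have "AE \<omega> in P. \<forall>i\<in>{1..n}. X i \<omega> \<in> \<MM>" by (intro AE_finite_allI AE_M) auto
        then show ?thesis unfolding Nn_def by (subst (asm) AE_iff_null) measurable
      qed
      have cb[measurable]: "cball s (\<epsilon>/2) \<in> sets borel" for s by simp
      have E_sets[measurable]: "E s \<in> sets P" for s unfolding E_def by measurable
      have sub: "{\<omega> \<in> space P. hausdorff_dist ((\<lambda>i. X i \<omega>) ` {1..n}) \<MM> > \<epsilon>} \<subseteq> (\<Union>s\<in>S. E s) \<union> Nn"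
      proof
        fix \<omega> assume "\<omega> \<in> {\<omega> \<in> space P. hausdorff_dist ((\<lambda>i. X i \<omega>) ` {1..n}) \<MM> > \<epsilon>}"
        then have \<omega>: "\<omega> \<in> space P" "\<not> hausdorff_dist ((\<lambda>i. X i \<omega>) ` {1..n}) \<MM> \<le> \<epsilon>" by auto
        show "\<omega> \<in> (\<Union>s\<in>S. E s) \<union> Nn"
        proof (cases "\<forall>i\<in>{1..n}. X i \<omega> \<in> \<MM>")
          case False then show ?thesis using \<omega> unfolding Nn_def by auto
        next
          case True
          have "\<not> ((\<forall>a\<in>(\<lambda>i. X i \<omega>) ` {1..n}. infdist a \<MM> \<le> \<epsilon>) \<and> (\<forall>x\<in>\<MM>. \<exists>a\<in>(\<lambda>i. X i \<omega>) ` {1..n}. dist x a \<le> \<epsilon>))"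
            using \<omega>(2) hd_le[of "(\<lambda>i. X i \<omega>) ` {1..n}" \<MM> \<epsilon>] n M_ne M_compact
            by (auto simp: compact_imp_bounded)
          moreover have "\<forall>a\<in>(\<lambda>i. X i \<omega>) ` {1..n}. infdist a \<MM> \<le> \<epsilon>" using True \<epsilon> by auto
          ultimately obtain x where x: "x \<in> \<MM>" "\<forall>i\<in>{1..n}. \<epsilon> < dist x (X i \<omega>)" by (auto simp: not_le)
          obtain s where s: "s \<in> S" "dist x s \<le> \<epsilon>/2" using cover[OF x(1)] by auto
          have "\<forall>i\<in>{1..n}. X i \<omega> \<notin> cball s (\<epsilon>/2)"
          proof (intro ballI)
            fix i assume "i \<in> {1..n}"
            with x have "\<epsilon> < dist x (X i \<omega>)" by auto
            moreover have "dist x (X i \<omega>) \<le> dist x s + dist s (X i \<omega>)" by (rule dist_triangle)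
            ultimately show "X i \<omega> \<notin> cball s (\<epsilon>/2)" using s by auto
          qed
          then show ?thesis using s \<omega> unfolding E_def by auto
        qed
      qed
      have "measure P {\<omega> \<in> space P. hausdorff_dist ((\<lambda>i. X i \<omega>) ` {1..n}) \<MM> > \<epsilon>}
          \<le> measure P ((\<Union>s\<in>S. E s) \<union> Nn)"
        by (rule P.finite_measure_mono[OF sub]) (intro sets.Un sets.finite_UN Sfin(1) E_sets null_setsD2[OF Nn_null])
      also have "\<dots> = measure P (\<Union>s\<in>S. E s)" by (rule measure_Un_null_set[OF _ Nn_null]) (intro sets.finite_UN Sfin(1) E_sets)
      also have "\<dots> \<le> (\<Sum>s\<in>S. measure P (E s))" by (rule P.finite_measure_subadditive_finite) (use Sfin in auto)
      also have "\<dots> \<le> (\<Sum>s\<in>S. (1 - q0) ^ n)"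
      proof (intro sum_mono)
        fix s assume "s \<in> S"
        then have sM: "s \<in> \<MM>" using Sfin by auto
        have "measure P (E s) \<le> (1 - \<kappa> * measure \<nu> (cball s (\<epsilon>/2) \<inter> \<MM>)) ^ n"
          unfolding E_def by (rule E_bound[OF sM])
        also have "\<dots> \<le> (1 - q0) ^ n" using q0_le[OF sM] q_le1[OF sM, of "\<epsilon>/2"] by (intro power_mono) auto
        finally show "measure P (E s) \<le> (1 - q0) ^ n" .
      qed
      also have "\<dots> = real (card S) * (1 - q0) ^ n" by simp
      also have "\<dots> \<le> N * (1 - q0) ^ n" using cardS q0_1 by (intro mult_right_mono) auto
      finally show ?thesis .
    qed
    show "measure P {\<omega> \<in> space P. hausdorff_dist ((\<lambda>i. X i \<omega>) ` {1..n}) \<MM> > \<epsilon>}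
               \<le> 4 powr b * (1 - \<kappa> * \<epsilon> powr b * V / 2 powr b) ^ n / (\<kappa> * \<epsilon> powr b * V)"
      if n1: "1 \<le> n" for n :: nat
    proof -
      have "N * (1 - q0) ^ n = 4 powr b * (1 - \<kappa> * \<epsilon> powr b * V / 2 powr b) ^ n / (\<kappa> * \<epsilon> powr b * V)"
        unfolding N_def q0_def by simp
      then show ?thesis using main[OF n1] by linarith
    qed
    show "measure P {\<omega> \<in> space P. hausdorff_dist ((\<lambda>i. X i \<omega>) ` {1..n}) \<MM> \<le> \<epsilon>} \<ge> 1 - \<alpha>"
      if \<alpha>: "0 < \<alpha> \<and> \<alpha> < 1"
      and nge: "real n \<ge> 2 powr b / (\<kappa> * \<epsilon> powr b * V)
                  * (ln (4 powr b / (\<kappa> * \<epsilon> powr b * V)) + ln (1 / \<alpha>))"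
      for \<alpha> :: real and n :: nat
    proof -
      have inv: "2 powr b / (\<kappa> * \<epsilon> powr b * V) = 1 / q0" unfolding q0_def by simp
      have Npos: "0 < N" unfolding N_def using pos by simp
      have "q0 * 2 powr b = \<kappa> * \<epsilon> powr b * V" unfolding q0_def by simp
      moreover have "q0 * 2 powr b \<le> 1 * 2 powr b" using q0_1 by (intro mult_right_mono) auto
      ultimately have le2: "\<kappa> * \<epsilon> powr b * V \<le> 2 powr b" by simp
      also have "2 powr b \<le> 4 powr b" using b_pos by (intro powr_mono2) auto
      finally have N1: "1 \<le> N" unfolding N_def using pos by (simp add: pos_le_divide_eq)
      have lnN: "0 \<le> ln N" using N1 by simp
      have lna: "0 < ln (1/\<alpha>)" using \<alpha> by simp
      define L where "L = ln N + ln (1/\<alpha>)"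
      have Lpos: "0 < L" unfolding L_def using lnN lna by simp
      have nge': "L / q0 \<le> real n" using nge unfolding inv L_def N_def by simp
      then have qn: "L \<le> q0 * real n" using q0_pos by (simp add: divide_le_eq mult.commute)
      have n1: "n \<ge> 1"
      proof -
        have "0 < L / q0" using Lpos q0_pos by simp
        with nge' show ?thesis by simp
      qed
      have "(1 - q0) ^ n \<le> exp (- q0) ^ n"
        using q0_1 exp_ge_add_one_self[of "- q0"] by (intro power_mono) auto
      also have "\<dots> = exp (- (q0 * real n))" by (simp add: exp_of_nat_mult[symmetric] mult.commute)
      also have "\<dots> \<le> exp (- L)" using qn by simp
      also have "\<dots> = \<alpha> / N"
      proof -
        have "exp L = exp (ln N) * exp (ln (1/\<alpha>))" unfolding L_def by (rule exp_add)
        also have "\<dots> = N / \<alpha>" using Npos \<alpha> by simp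
        finally have "exp L = N / \<alpha>" .
        then show ?thesis unfolding exp_minus by simp
      qed
      finally have "N * (1 - q0) ^ n \<le> N * (\<alpha> / N)" using Npos by (intro mult_left_mono) auto
      also have "N * (\<alpha> / N) = \<alpha>" using Npos by simp
      finally have bad: "measure P {\<omega> \<in> space P. hausdorff_dist ((\<lambda>i. X i \<omega>) ` {1..n}) \<MM> > \<epsilon>} \<le> \<alpha>"
        using main[OF n1] by linarith
      have G: "{\<omega>\<in>space P. hausdorff_dist ((\<lambda>i. X i \<omega>) ` {1..n}) \<MM> \<le> \<epsilon>} \<in> sets P"
        by (rule hd_meas[OF X_meas M_compact M_ne n1])
      have "{\<omega> \<in> space P. hausdorff_dist ((\<lambda>i. X i \<omega>) ` {1..n}) \<MM> > \<epsilon>}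
          = space P - {\<omega>\<in>space P. hausdorff_dist ((\<lambda>i. X i \<omega>) ` {1..n}) \<MM> \<le> \<epsilon>}" by auto
      then have "measure P {\<omega> \<in> space P. hausdorff_dist ((\<lambda>i. X i \<omega>) ` {1..n}) \<MM> > \<epsilon>}
          = 1 - measure P {\<omega>\<in>space P. hausdorff_dist ((\<lambda>i. X i \<omega>) ` {1..n}) \<MM> \<le> \<epsilon>}"
        using P.prob_compl[OF G] by simp
      with bad show ?thesis by linarith
    qed
  qed
qed

end
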